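(* Let $K \le L$ be positive integers, $N = L+K$, and let $\mathbf{P}_d \in \mathbb{C}^{L\times K}$ be an arbitrary (fully digital) beamforming matrix with singular value decomposition $\mathbf{P}_d = \mathbf{U}\mathbf{S}\mathbf{V}^\mathsf{H}$, where $\mathbf{U} = [\mathbf{U}_1, \mathbf{U}_2] \in \mathbb{C}^{L\times L}$ is unitary with $\mathbf{U}_1 \in \mathbb{C}^{L\times K}$, $\mathbf{U}_2 \in \mathbb{C}^{L\times (L-K)}$, $\mathbf{S} \in \mathbb{R}^{L\times K}$ is a rectangular diagonal matrix with nonnegative diagonal entries $s_1,\dots,s_K$, and $\mathbf{V}\in\mathbb{C}^{K\times K}$ is unitary. Define $$\boldsymbol\Theta^\star = \begin{bmatrix} \mathbf{0}_{K\times K} & \mathbf{V}^* \\ \mathbf{V}^\mathsf{H} & \mathbf{0}_{K\times K}\end{bmatrix}\in\mathbb{C}^{2K\times 2K},\qquad \boldsymbol\Phi^\star = \begin{bmatrix} \mathbf{0}_{K\times K} & \mathbf{U}_1^\mathsf{T} \\ \mathbf{U}_1 & -\mathbf{U}_2\mathbf{U}_2^\mathsf{T}\end{bmatrix}\in\mathbb{C}^{N\times N},$$ and $(\mathbf{P}^\star)^{1/2} = 4\,\operatorname{diag}(s_1,\dots,s_K)\in\mathbb{R}^{K\times K}$. Then $\boldsymbol\Theta^\star$ and $\boldsymbol\Phi^\star$ are feasible scattering matrices of lossless reciprocal MiLACs, i.e. $(\boldsymbol\Theta^\star)^\mathsf{H}\boldsymbol\Theta^\star = \mathbf{I}_{2K}$,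 $\boldsymbol\Theta^\star = (\boldsymbol\Theta^\star)^\mathsf{T}$, $(\boldsymbol\Phi^\star)^\mathsf{H}\boldsymbol\Phi^\star = \mathbf{I}_{N}$, $\boldsymbol\Phi^\star = (\boldsymbol\Phi^\star)^\mathsf{T}$; the corresponding analog beamformers are $$\mathbf{F}^\star = \tfrac12[\boldsymbol\Theta^\star]_{K+1:2K,\,1:K} = \tfrac12\mathbf{V}^\mathsf{H},\qquad \mathbf{W}^\star = \tfrac12[\boldsymbol\Phi^\star]_{K+1:N,\,1:K} = \tfrac12\mathbf{U}_1;$$ and the effective two-layer MiLAC beamforming matrix satisfies $\mathbf{G} := \mathbf{W}^\star(\mathbf{P}^\star)^{1/2}\mathbf{F}^\star = \mathbf{P}_d$. Hence the two-layer MiLAC architecture can exactly realize any fully digital beamformer.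
   Context: Setting: a base station with $L$ antennas serves $K$ single-antenna users. In the two-layer MiLAC (microwave linear analog computer) transmitter, the symbol vector $\mathbf{s}\in\mathbb{C}^K$ is mapped to the transmit signal $\mathbf{x} = \mathbf{W}\mathbf{P}^{1/2}\mathbf{F}\mathbf{s}$, where: MiLAC 1 is a $2K$-port lossless reciprocal microwave network with scattering matrix $\boldsymbol\Theta\in\mathbb{C}^{2K\times 2K}$ and analog beamformer $\mathbf{F} = \tfrac12[\boldsymbol\Theta]_{K+1:2K,1:K}$ (rows $K+1$ to $2K$, columns $1$ to $K$); MiLAC 2 is an $N=(L+K)$-port lossless reciprocal network with scattering matrix $\boldsymbol\Phi\in\mathbb{C}^{N\times N}$ and analog beamformer $\mathbf{W} = \tfrac12[\boldsymbol\Phi]_{K+1:N,1:K}$; and $\mathbf{P}^{1/2} = \operatorname{diag}(\sqrt{p_1},\dots,\sqrt{p_K})$ is the diagonal amplifier power-allocation matrix. Losslessness and reciprocity mean the scattering matrices are unitary and symmetric: $\boldsymbol\Theta^\mathsf{H}\boldsymbol\Theta = \mathbf{I}$, $\boldsymbol\Theta = \boldsymbol\Theta^\mathsf{T}$, and likewise for $\boldsymbol\Phi$. $(\cdot)^*$ is entrywise complex conjugate, $(\cdot)^\mathsf{T}$ transpose, $(\cdot)^\mathsf{H}$ conjugate transpose. *)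

theory Defs
  imports "HOL-Analysis.Analysis" "Jordan_Normal_Form.Matrix"
begin

definition conj_mat :: "complex mat \<Rightarrow> complex mat" where
  "conj_mat A = map_mat cnj A"

definition herm :: "complex mat \<Rightarrow> complex mat" where
  "herm A = conj_mat (transpose_mat A)"

definition unitary_mat :: "nat \<Rightarrow> complex mat \<Rightarrow> bool" where
  "unitary_mat n A \<longleftrightarrow> A \<in> carrier_mat n n \<and> herm A * A = 1\<^sub>m n \<and> A * herm A = 1\<^sub>m n"

text \<open>Sub-block of rows r0..r0+nr-1 and columns c0..c0+nc-1 (0-based indexing).
  The paper's 1-based block [A]_{a:b, c:d} is  sub_block A (a-1) (b-a+1) (c-1) (d-c+1).\<close>
definition sub_block :: "'a mat \<Rightarrow> nat \<Rightarrow> nat \<Rightarrow> nat \<Rightarrow> nat \<Rightarrow> 'a mat" where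
  "sub_block A r0 nr c0 nc = mat nr nc (\<lambda>(i,j). A $$ (r0 + i, c0 + j))"

definition lossless_reciprocal :: "nat \<Rightarrow> complex mat \<Rightarrow> bool" where
  "lossless_reciprocal n A \<longleftrightarrow> A \<in> carrier_mat n n \<and> herm A * A = 1\<^sub>m n \<and> A = transpose_mat A"

end

theory Submission
  imports Defs
begin

lemma conj_mat_dims[simp]: "dim_row (conj_mat A) = dim_row A" "dim_col (conj_mat A) = dim_col A"
  by (auto simp: conj_mat_def)

lemma herm_dims[simp]: "dim_row (herm A) = dim_col A" "dim_col (herm A) = dim_row A"
  unfolding herm_def by simp_all

lemma conj_mat_carrier[simp]: "conj_mat A \<in> carrier_mat n m \<longleftrightarrow> A \<in> carrier_mat n m"
  unfolding carrier_mat_def by simp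

lemma herm_carrier[simp]: "herm A \<in> carrier_mat n m \<longleftrightarrow> A \<in> carrier_mat m n"
  unfolding carrier_mat_def by auto

lemma index_conj_mat[simp]: "i < dim_row A \<Longrightarrow> j < dim_col A \<Longrightarrow> conj_mat A $$ (i,j) = cnj (A $$ (i,j))"
  by (simp add: conj_mat_def)

lemma index_herm[simp]: "i < dim_col A \<Longrightarrow> j < dim_row A \<Longrightarrow> herm A $$ (i,j) = cnj (A $$ (j,i))"
  unfolding herm_def by (subst index_conj_mat) auto

lemma conj_mat_mult:
  assumes "A \<in> carrier_mat n m" "B \<in> carrier_mat m p"
  shows "conj_mat (A * B) = conj_mat A * conj_mat B"
  by (rule eq_matI, insert assms, auto simp: scalar_prod_def cnj_sum)

lemma conj_mat_uminus: "conj_mat (- A) = - conj_mat A"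
  by (rule eq_matI, auto)

lemma conj_mat_zero[simp]: "conj_mat (0\<^sub>m n m) = 0\<^sub>m n m"
  by (rule eq_matI, auto)

lemma conj_mat_one[simp]: "conj_mat (1\<^sub>m n) = 1\<^sub>m n"
  by (rule eq_matI, auto)

lemma conj_mat_transpose: "conj_mat (transpose_mat A) = herm A"
  by (simp add: herm_def)

lemma conj_mat_conj[simp]: "conj_mat (conj_mat A) = A"
  by (rule eq_matI, auto)

lemma conj_mat_herm: "conj_mat (herm A) = transpose_mat A"
  by (rule eq_matI, auto)

lemma unit_transpose:
  assumes "A \<in> carrier_mat n m" "herm A * A = 1\<^sub>m m"
  shows "transpose_mat A * conj_mat A = 1\<^sub>m m"
proof -
  have "conj_mat (herm A * A) = conj_mat (herm A) * conj_mat A"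
    by (rule conj_mat_mult[of _ m n _ m], insert assms, auto)
  thus ?thesis using assms by (simp add: conj_mat_herm)
qed

lemma unit_conj:
  assumes "A \<in> carrier_mat n m" "A * herm A = 1\<^sub>m n"
  shows "conj_mat A * transpose_mat A = 1\<^sub>m n"
proof -
  have "conj_mat (A * herm A) = conj_mat A * conj_mat (herm A)"
    by (rule conj_mat_mult[of _ n m _ n], insert assms, auto)
  thus ?thesis using assms by (simp add: conj_mat_herm)
qed

lemma sum_split_shift:
  fixes f :: "nat \<Rightarrow> 'a :: comm_monoid_add"
  assumes "K \<le> L"
  shows "sum f {0..<L} = sum f {0..<K} + sum (\<lambda>k. f (K + k)) {0..<L - K}"
proof -
  have "sum f {0..<L} = sum f {0..<K} + sum f {K..<L}"
    using assms by (simp add: sum.atLeastLessThan_concat)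
  also have "sum f {K..<L} = sum (\<lambda>k. f (K + k)) {0..<L - K}"
  proof -
    have "sum (\<lambda>k. f (K + k)) {0..<L - K} = sum (\<lambda>k. f (k + K)) {0..<L - K}"
      by (simp add: add.commute)
    also have "... = sum f {0 + K..<L - K + K}"
      by (rule sum.shift_bounds_nat_ivl[symmetric])
    also have "... = sum f {K..<L}" using assms by simp
    finally show ?thesis by simp
  qed
  finally show ?thesis .
qed


lemma transpose_conj: "transpose_mat (conj_mat A) = herm A"
  by (rule eq_matI, auto)

lemma transpose_herm: "transpose_mat (herm A) = conj_mat A"
  by (rule eq_matI, auto)

lemma mult_entry:
  assumes "A \<in> carrier_mat n m" "B \<in> carrier_mat m p" "i < n" "j < p"
  shows "(A * B) $$ (i,j) = (\<Sum>k = 0..<m. A $$ (i,k) * B $$ (k,j))"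
  using assms by (auto simp: scalar_prod_def intro!: sum.cong)

lemma smult_smult_mat: "a \<cdot>\<^sub>m (b \<cdot>\<^sub>m A) = (a * b :: 'a :: semigroup_mult) \<cdot>\<^sub>m A"
  by (rule eq_matI, auto simp: mult.assoc)

lemma smult_one_mat': "(1 :: 'a :: monoid_mult) \<cdot>\<^sub>m A = A"
  by (rule eq_matI, auto)

lemma uminus_zero_mat'[simp]: "- 0\<^sub>m n m = (0\<^sub>m n m :: 'a :: group_add mat)"
  by (rule eq_matI, auto)

theorem theorem1:
  fixes K L :: nat
    and Pd U U1 U2 V S :: "complex mat"
  assumes K_pos: "0 < K" and KL: "K \<le> L"
    and Pd_dim: "Pd \<in> carrier_mat L K"
    and U_unit: "unitary_mat L U"
    and V_unit: "unitary_mat K V"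
    and S_dim: "S \<in> carrier_mat L K"
    and S_diag: "\<forall>i<L. \<forall>j<K. i \<noteq> j \<longrightarrow> S $$ (i, j) = 0"
    and S_nonneg: "\<forall>i<K. S $$ (i, i) \<in> \<real> \<and> 0 \<le> Re (S $$ (i, i))"
    and svd: "Pd = U * S * herm V"
    and U1_def: "U1 = sub_block U 0 L 0 K"
    and U2_def: "U2 = sub_block U 0 L K (L - K)"
  defines "Theta \<equiv> four_block_mat (0\<^sub>m K K) (conj_mat V) (herm V) (0\<^sub>m K K)"
    and "Phi \<equiv> four_block_mat (0\<^sub>m K K) (transpose_mat U1) U1 (- (U2 * transpose_mat U2))"
    and "Psqrt \<equiv> mat K K (\<lambda>(i, j). if i = j then 4 * S $$ (i, i) else 0)"
  shows "lossless_reciprocal (2 * K) Theta \<and> lossless_reciprocal (L + K) Phi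
         \<and> (let F = (1/2 :: complex) \<cdot>\<^sub>m sub_block Theta K K 0 K;
                W = (1/2 :: complex) \<cdot>\<^sub>m sub_block Phi K L 0 K
            in F = (1/2 :: complex) \<cdot>\<^sub>m herm V \<and> W = (1/2 :: complex) \<cdot>\<^sub>m U1
               \<and> W * Psqrt * F = Pd)"
proof -
  have U: "U \<in> carrier_mat L L" and hUU: "herm U * U = 1\<^sub>m L" and UhU: "U * herm U = 1\<^sub>m L"
    using U_unit unfolding unitary_mat_def by auto
  have V: "V \<in> carrier_mat K K" and hVV: "herm V * V = 1\<^sub>m K" and VhV: "V * herm V = 1\<^sub>m K"
    using V_unit unfolding unitary_mat_def by auto
  have U1c: "U1 \<in> carrier_mat L K" unfolding U1_def sub_block_def by simp
  have U2c: "U2 \<in> carrier_mat L (L - K)" unfolding U2_def sub_block_def by simp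
  have U1i: "U1 $$ (i,j) = U $$ (i,j)" if "i < L" "j < K" for i j
    using that unfolding U1_def sub_block_def by simp
  have U2i: "U2 $$ (i,j) = U $$ (i,K + j)" if "i < L" "j < L - K" for i j
    using that unfolding U2_def sub_block_def by simp
  have hUUi: "(\<Sum>k = 0..<L. cnj (U $$ (k,i)) * U $$ (k,j)) = (if i = j then 1 else 0)"
    if "i < L" "j < L" for i j
  proof -
    have "(herm U * U) $$ (i,j) = (\<Sum>k = 0..<L. cnj (U $$ (k,i)) * U $$ (k,j))"
      using that U by (subst mult_entry[of _ L L _ L]) (auto intro!: sum.cong)
    thus ?thesis using hUU that by simp
  qed
  have h11: "herm U1 * U1 = 1\<^sub>m K"
  proof (rule eq_matI)
    fix i j assume "i < dim_row (1\<^sub>m K)" "j < dim_col (1\<^sub>m K)"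
    hence ij: "i < K" "j < K" by auto
    have "(herm U1 * U1) $$ (i,j) = (\<Sum>k = 0..<L. cnj (U $$ (k,i)) * U $$ (k,j))"
      using ij U1c KL by (subst mult_entry[of _ K L _ K]) (auto simp: U1i intro!: sum.cong)
    also have "... = 1\<^sub>m K $$ (i,j)" using ij KL by (subst hUUi) auto
    finally show "(herm U1 * U1) $$ (i,j) = 1\<^sub>m K $$ (i,j)" .
  qed (use U1c in auto)
  have h12: "herm U1 * U2 = 0\<^sub>m K (L - K)"
  proof (rule eq_matI)
    fix i j assume "i < dim_row (0\<^sub>m K (L - K))" "j < dim_col (0\<^sub>m K (L - K))"
    hence ij: "i < K" "j < L - K" by auto
    have "(herm U1 * U2) $$ (i,j) = (\<Sum>k = 0..<L. cnj (U $$ (k,i)) * U $$ (k,K + j))"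
      using ij U1c U2c KL by (subst mult_entry[of _ K L _ "L - K"]) (auto simp: U1i U2i intro!: sum.cong)
    also have "... = 0" using ij KL by (subst hUUi) auto
    finally show "(herm U1 * U2) $$ (i,j) = 0\<^sub>m K (L - K) $$ (i,j)" using ij by simp
  qed (use U1c U2c in auto)
  have h21: "herm U2 * U1 = 0\<^sub>m (L - K) K"
  proof (rule eq_matI)
    fix i j assume "i < dim_row (0\<^sub>m (L - K) K)" "j < dim_col (0\<^sub>m (L - K) K)"
    hence ij: "i < L - K" "j < K" by auto
    have "(herm U2 * U1) $$ (i,j) = (\<Sum>k = 0..<L. cnj (U $$ (k,K + i)) * U $$ (k,j))"
      using ij U1c U2c KL by (subst mult_entry[of _ "L - K" L _ K]) (auto simp: U1i U2i intro!: sum.cong)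
    also have "... = 0" using ij KL by (subst hUUi) auto
    finally show "(herm U2 * U1) $$ (i,j) = 0\<^sub>m (L - K) K $$ (i,j)" using ij by simp
  qed (use U1c U2c in auto)
  have h22: "herm U2 * U2 = 1\<^sub>m (L - K)"
  proof (rule eq_matI)
    fix i j assume "i < dim_row (1\<^sub>m (L - K))" "j < dim_col (1\<^sub>m (L - K))"
    hence ij: "i < L - K" "j < L - K" by auto
    have "(herm U2 * U2) $$ (i,j) = (\<Sum>k = 0..<L. cnj (U $$ (k,K + i)) * U $$ (k,K + j))"
      using ij U2c KL by (subst mult_entry[of _ "L - K" L _ "L - K"]) (auto simp: U2i intro!: sum.cong)
    also have "... = 1\<^sub>m (L - K) $$ (i,j)" using ij KL by (subst hUUi) auto
    finally show "(herm U2 * U2) $$ (i,j) = 1\<^sub>m (L - K) $$ (i,j)" .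
  qed (use U2c in auto)
  have cUUt: "conj_mat U * transpose_mat U = 1\<^sub>m L" by (rule unit_conj[OF U UhU])
  have hsum: "conj_mat U1 * transpose_mat U1 + conj_mat U2 * transpose_mat U2 = 1\<^sub>m L"
  proof (rule eq_matI)
    fix i j assume "i < dim_row (1\<^sub>m L)" "j < dim_col (1\<^sub>m L)"
    hence ij: "i < L" "j < L" by auto
    let ?f = "\<lambda>k. cnj (U $$ (i,k)) * U $$ (j,k)"
    have a: "(conj_mat U1 * transpose_mat U1) $$ (i,j) = (\<Sum>k = 0..<K. ?f k)"
      using ij U1c by (subst mult_entry[of _ L K _ L]) (auto simp: U1i intro!: sum.cong)
    have b: "(conj_mat U2 * transpose_mat U2) $$ (i,j) = (\<Sum>k = 0..<L - K. ?f (K + k))"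
      using ij U2c by (subst mult_entry[of _ L "L - K" _ L]) (auto simp: U2i intro!: sum.cong)
    have c: "(conj_mat U * transpose_mat U) $$ (i,j) = (\<Sum>k = 0..<L. ?f k)"
      using ij U by (subst mult_entry[of _ L L _ L]) (auto intro!: sum.cong)
    have "(conj_mat U1 * transpose_mat U1 + conj_mat U2 * transpose_mat U2) $$ (i,j)
        = (conj_mat U1 * transpose_mat U1) $$ (i,j) + (conj_mat U2 * transpose_mat U2) $$ (i,j)"
      using ij U1c U2c by simp
    also have "... = (\<Sum>k = 0..<L. ?f k)" unfolding a b by (rule sum_split_shift[OF KL, symmetric])
    also have "... = 1\<^sub>m L $$ (i,j)" using c cUUt by simp
    finally show "(conj_mat U1 * transpose_mat U1 + conj_mat U2 * transpose_mat U2) $$ (i,j) = 1\<^sub>m L $$ (i,j)" .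
  qed (use U1c U2c in auto)

  have Thc: "Theta \<in> carrier_mat (2 * K) (2 * K)"
  proof -
    have "Theta \<in> carrier_mat (K + K) (K + K)"
      unfolding Theta_def by (rule four_block_carrier_mat) simp_all
    thus ?thesis by (simp add: mult_2)
  qed
  have ThT: "Theta = transpose_mat Theta"
    unfolding Theta_def
    apply (subst transpose_four_block_mat[OF zero_carrier_mat _ _ zero_carrier_mat])
    using V apply simp_all
    apply (simp only: transpose_conj transpose_herm zero_transpose_mat)
    done
  have hTh: "herm Theta = four_block_mat (0\<^sub>m K K) V (transpose_mat V) (0\<^sub>m K K)"
  proof -
    have "herm Theta = conj_mat Theta" unfolding herm_def using ThT by simp
    also have "... = four_block_mat (0\<^sub>m K K) V (transpose_mat V) (0\<^sub>m K K)"
    proof -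
      have "conj_mat Theta = four_block_mat (conj_mat (0\<^sub>m K K)) (conj_mat (conj_mat V)) (conj_mat (herm V)) (conj_mat (0\<^sub>m K K))"
        unfolding Theta_def conj_mat_def
        by (rule map_four_block_mat[OF zero_carrier_mat _ _ zero_carrier_mat]) (use V in \<open>simp_all\<close>)
      thus ?thesis by (simp only: conj_mat_zero conj_mat_conj conj_mat_herm)
    qed
    finally show ?thesis .
  qed
  have ThU: "herm Theta * Theta = 1\<^sub>m (2 * K)"
  proof -
    have tv: "transpose_mat V * conj_mat V = 1\<^sub>m K" by (rule unit_transpose[OF V hVV])
    have "herm Theta * Theta = four_block_mat (0\<^sub>m K K * 0\<^sub>m K K + V * herm V) (0\<^sub>m K K * conj_mat V + V * 0\<^sub>m K K)
        (transpose_mat V * 0\<^sub>m K K + 0\<^sub>m K K * herm V) (transpose_mat V * conj_mat V + 0\<^sub>m K K * 0\<^sub>m K K)"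
      unfolding hTh unfolding Theta_def
      by (rule mult_four_block_mat[OF zero_carrier_mat V _ zero_carrier_mat zero_carrier_mat _ _ zero_carrier_mat])
        (use V in auto)
    also have "... = four_block_mat (1\<^sub>m K) (0\<^sub>m K K) (0\<^sub>m K K) (1\<^sub>m K)"
      using V VhV tv by simp
    also have "... = 1\<^sub>m (2 * K)" by (simp add: mult_2)
    finally show ?thesis .
  qed
  have LRTh: "lossless_reciprocal (2 * K) Theta"
    unfolding lossless_reciprocal_def using Thc ThT ThU by simp

  have hU1c: "herm U1 \<in> carrier_mat K L" using U1c by simp
  have hU2c: "herm U2 \<in> carrier_mat (L - K) L" using U2c by simp
  have cU1c: "conj_mat U1 \<in> carrier_mat L K" using U1c by simp
  have cU2c: "conj_mat U2 \<in> carrier_mat L (L - K)" using U2c by simp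
  have tU1c: "transpose_mat U1 \<in> carrier_mat K L" using U1c by simp
  have tU2c: "transpose_mat U2 \<in> carrier_mat (L - K) L" using U2c by simp
  have DDc: "- (U2 * transpose_mat U2) \<in> carrier_mat L L" using U2c tU2c by simp
  have Phc: "Phi \<in> carrier_mat (L + K) (L + K)"
  proof -
    have "Phi \<in> carrier_mat (K + L) (K + L)"
      unfolding Phi_def by (rule four_block_carrier_mat[OF zero_carrier_mat DDc])
    thus ?thesis by (simp add: add.commute)
  qed
  have PhT: "Phi = transpose_mat Phi"
  proof -
    have "transpose_mat (U2 * transpose_mat U2) = U2 * transpose_mat U2"
      using U2c by (subst transpose_mult[of _ L "L - K" _ L]) auto
    thus ?thesis
      unfolding Phi_def
      apply (subst transpose_four_block_mat[OF zero_carrier_mat tU1c U1c DDc])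
      apply (simp only: transpose_uminus transpose_transpose zero_transpose_mat)
      done
  qed
  have hPh: "herm Phi = four_block_mat (0\<^sub>m K K) (herm U1) (conj_mat U1) (- (conj_mat U2 * herm U2))"
  proof -
    have e1: "herm Phi = conj_mat Phi" unfolding herm_def using PhT by simp
    have e2: "conj_mat Phi = four_block_mat (conj_mat (0\<^sub>m K K)) (conj_mat (transpose_mat U1)) (conj_mat U1)
        (conj_mat (- (U2 * transpose_mat U2)))"
      unfolding Phi_def conj_mat_def
      by (rule map_four_block_mat[OF zero_carrier_mat tU1c U1c DDc])
    have e3: "conj_mat (- (U2 * transpose_mat U2)) = - (conj_mat U2 * herm U2)"
      using U2c by (simp add: conj_mat_uminus conj_mat_mult[of _ L "L - K" _ L] conj_mat_transpose)
    show ?thesis unfolding e1 e2 e3 by (simp add: conj_mat_transpose)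
  qed
  have B1: "0\<^sub>m K K * 0\<^sub>m K K + herm U1 * U1 = 1\<^sub>m K" using h11 by simp
  have B2: "0\<^sub>m K K * transpose_mat U1 + herm U1 * (- (U2 * transpose_mat U2)) = 0\<^sub>m K L"
  proof -
    have "herm U1 * (U2 * transpose_mat U2) = (herm U1 * U2) * transpose_mat U2"
      using hU1c U2c tU2c by (simp add: assoc_mult_mat[of _ K L _ "L - K" _ L])
    also have "... = 0\<^sub>m K L" using h12 tU2c by simp
    finally have "herm U1 * (U2 * transpose_mat U2) = 0\<^sub>m K L" .
    moreover have "herm U1 * (- (U2 * transpose_mat U2)) = - (herm U1 * (U2 * transpose_mat U2))"
      using hU1c U2c tU2c by (subst uminus_mult_right_mat) auto
    ultimately show ?thesis using tU1c by simp
  qed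
  have B3: "conj_mat U1 * 0\<^sub>m K K + (- (conj_mat U2 * herm U2)) * U1 = 0\<^sub>m L K"
  proof -
    have "(conj_mat U2 * herm U2) * U1 = conj_mat U2 * (herm U2 * U1)"
      using cU2c hU2c U1c by (simp add: assoc_mult_mat[of _ L "L - K" _ L _ K])
    also have "... = 0\<^sub>m L K" using h21 cU2c by simp
    finally have "(conj_mat U2 * herm U2) * U1 = 0\<^sub>m L K" .
    moreover have "(- (conj_mat U2 * herm U2)) * U1 = - ((conj_mat U2 * herm U2) * U1)"
      using cU2c hU2c U1c by (subst uminus_mult_left_mat) auto
    ultimately show ?thesis using cU1c by simp
  qed
  have B4: "conj_mat U1 * transpose_mat U1 + (- (conj_mat U2 * herm U2)) * (- (U2 * transpose_mat U2)) = 1\<^sub>m L"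
  proof -
    have "(- (conj_mat U2 * herm U2)) * (- (U2 * transpose_mat U2)) = (conj_mat U2 * herm U2) * (U2 * transpose_mat U2)"
      using cU2c hU2c U2c tU2c by simp
    also have "... = conj_mat U2 * ((herm U2 * U2) * transpose_mat U2)"
      using cU2c hU2c U2c tU2c
      by (simp add: assoc_mult_mat[of _ L "L - K" _ L _ L] assoc_mult_mat[of _ "L - K" L _ "L - K" _ L])
    also have "... = conj_mat U2 * transpose_mat U2" using h22 tU2c by simp
    finally show ?thesis using hsum by simp
  qed
  have PhU: "herm Phi * Phi = 1\<^sub>m (L + K)"
  proof -
    have "herm Phi * Phi = four_block_mat (0\<^sub>m K K * 0\<^sub>m K K + herm U1 * U1)
        (0\<^sub>m K K * transpose_mat U1 + herm U1 * (- (U2 * transpose_mat U2)))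
        (conj_mat U1 * 0\<^sub>m K K + (- (conj_mat U2 * herm U2)) * U1)
        (conj_mat U1 * transpose_mat U1 + (- (conj_mat U2 * herm U2)) * (- (U2 * transpose_mat U2)))"
      unfolding hPh unfolding Phi_def
      by (rule mult_four_block_mat[OF zero_carrier_mat hU1c cU1c _ zero_carrier_mat tU1c U1c])
        (use U1c U2c in auto)
    also have "... = 1\<^sub>m (K + L)" unfolding B1 B2 B3 B4 by simp
    finally show ?thesis by (simp add: add.commute)
  qed
  have LRPh: "lossless_reciprocal (L + K) Phi"
    unfolding lossless_reciprocal_def using Phc PhT PhU by simp

  have Fsub: "sub_block Theta K K 0 K = herm V"
    by (rule eq_matI) (use V in \<open>auto simp: sub_block_def Theta_def\<close>)
  have Wsub: "sub_block Phi K L 0 K = U1"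
    by (rule eq_matI) (use U1c U2c in \<open>auto simp: sub_block_def Phi_def\<close>)
  define D where "D = mat K K (\<lambda>(i, j). if i = j then S $$ (i, i) else 0)"
  have Dc: "D \<in> carrier_mat K K" unfolding D_def by simp
  have PD: "Psqrt = 4 \<cdot>\<^sub>m D"
    unfolding Psqrt_def D_def by (rule eq_matI) auto
  have UD: "U1 * D = U * S"
  proof (rule eq_matI)
    fix i j assume "i < dim_row (U * S)" "j < dim_col (U * S)"
    hence ij: "i < L" "j < K" using U S_dim by auto
    have jL: "j < L" using ij KL by simp
    have "(U1 * D) $$ (i,j) = (\<Sum>k = 0..<K. U $$ (i,k) * (if k = j then S $$ (k,k) else 0))"
      using ij U1c Dc by (subst mult_entry[of _ L K _ K]) (auto simp: U1i D_def intro!: sum.cong)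
    also have "... = (\<Sum>k = 0..<K. if k = j then U $$ (i,j) * S $$ (j,j) else 0)"
      by (rule sum.cong) auto
    also have "... = U $$ (i,j) * S $$ (j,j)" using ij by simp
    also have "... = (\<Sum>k = 0..<L. if k = j then U $$ (i,j) * S $$ (j,j) else 0)" using jL by simp
    also have "... = (\<Sum>k = 0..<L. U $$ (i,k) * S $$ (k,j))"
      by (rule sum.cong) (use S_diag ij in auto)
    also have "... = (U * S) $$ (i,j)" by (rule mult_entry[OF U S_dim ij, symmetric])
    finally show "(U1 * D) $$ (i,j) = (U * S) $$ (i,j)" .
  qed (use U1c Dc U S_dim in auto)
  have G: "((1/2 :: complex) \<cdot>\<^sub>m U1) * Psqrt * ((1/2 :: complex) \<cdot>\<^sub>m herm V) = Pd"
  proof -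
    have hVc: "herm V \<in> carrier_mat K K" using V by simp
    have "((1/2 :: complex) \<cdot>\<^sub>m U1) * (4 \<cdot>\<^sub>m D) * ((1/2 :: complex) \<cdot>\<^sub>m herm V)
        = ((1/2 :: complex) * (4 * (1/2))) \<cdot>\<^sub>m (U1 * D * herm V)"
      using U1c Dc hVc
      by (simp add: mult_smult_assoc_mat[of _ L K _ K] mult_smult_distrib[of _ L K _ K]
          smult_smult_mat)
    also have "... = U * S * herm V" using UD by (simp add: smult_one_mat')
    finally show ?thesis unfolding PD svd .
  qed
  show ?thesis using LRTh LRPh Fsub Wsub G by (simp add: Let_def)
qed

end
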